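(* For every $\varepsilon>0$ there is $\delta>0$ such that the following holds. Let $G=(V_1,V_2,E)$ be a bipartite graph with $|V_1|\ge|V_2|/2$, and let $\mathcal P=\{x_0,x_1,\ldots,x_{|V_2|^{0.5}}\}$ be an $\varepsilon$-pair-star of size $|V_2|^{0.5}$ rooted at $x_0$ associated to $V_1$. If $W\subset V_2$ is chosen uniformly at random among all subsets of $V_2$, then $\mathbb P\big(|A^W_{\mathcal P}|\ge\delta|V_2|^{0.5}\big)\ge 3/4$, where $$A^W_{\mathcal P}:=\{d^W(x_i)-d^W(x_0): i\in[|V_2|^{0.5}]\}\cap[-3|V_2|^{0.5},3|V_2|^{0.5}].$$
   Context: A bipartite graph $G=(V_1,V_2,E)$ has vertex set $V_1\sqcup V_2$ and edge set $E\subset V_1\times V_2$; $N(v)$ is the neighbourhood and $d(v)$ the degree of $v$, and for $S\subset V_2$, $d^S(v)=|N(v)\cap S|$. For $u,v\in V_1$, $\mathrm{div}(u,v)=N(u)\triangle N(v)$. An $\varepsilon$-pair-star of size $k$ associated to $V_1$ rooted at $x_0$ is a set $\{x_0,x_1,\ldots,x_k\}\subset V_1$ with $|d(x_j)-d(x_0)|\le|V_2|^{0.5}$ for all $j\in[k]$ and $|\mathrm{div}(x_i,x_j)|\ge\varepsilon|V_2|$ for all $i\ne j$ in $\{0,\ldots,k\}$. Floors/ceilings of non-integer sizes are ignored. *)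

theory Defs
  imports Main Complex_Main
begin

text \<open>A bipartite graph is given by finite vertex sets V1, V2 and an edge set E \<subseteq> V1 \<times> V2.\<close>

definition nbhd :: "('a \<times> 'b) set \<Rightarrow> 'a \<Rightarrow> 'b set" where
  "nbhd E v = {w. (v, w) \<in> E}"

definition deg :: "('a \<times> 'b) set \<Rightarrow> 'a \<Rightarrow> nat" where
  "deg E v = card (nbhd E v)"

definition degS :: "('a \<times> 'b) set \<Rightarrow> 'b set \<Rightarrow> 'a \<Rightarrow> nat" where
  "degS E S v = card (nbhd E v \<inter> S)"

definition divg :: "('a \<times> 'b) set \<Rightarrow> 'a \<Rightarrow> 'a \<Rightarrow> 'b set" where
  "divg E u v = (nbhd E u - nbhd E v) \<union> (nbhd E v - nbhd E u)"

definition pair_star ::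
  "real \<Rightarrow> 'a set \<Rightarrow> 'b set \<Rightarrow> ('a \<times> 'b) set \<Rightarrow> 'a set \<Rightarrow> 'a \<Rightarrow> nat \<Rightarrow> bool" where
  "pair_star eps V1 V2 E P x0 k \<longleftrightarrow>
     P \<subseteq> V1 \<and> x0 \<in> P \<and> card P = k + 1 \<and>
     (\<forall>x\<in>P - {x0}. \<bar>real (deg E x) - real (deg E x0)\<bar> \<le> sqrt (real (card V2))) \<and>
     (\<forall>u\<in>P. \<forall>v\<in>P. u \<noteq> v \<longrightarrow> real (card (divg E u v)) \<ge> eps * real (card V2))"

definition AWP :: "('a \<times> 'b) set \<Rightarrow> 'b set \<Rightarrow> 'a set \<Rightarrow> 'a \<Rightarrow> 'b set \<Rightarrow> int set" where
  "AWP E V2 P x0 W =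
     {int (degS E W x) - int (degS E W x0) | x. x \<in> P - {x0}}
     \<inter> {z. \<bar>real_of_int z\<bar> \<le> 3 * sqrt (real (card V2))}"

end

theory Submission
  imports Defs
begin

definition sg :: "'b set \<Rightarrow> 'b \<Rightarrow> real" where
  "sg W v = (if v \<in> W then 1 else -1)"

lemma sg_orth:
  assumes "finite V" "u \<in> V" "u \<noteq> v"
  shows "(\<Sum>W\<in>Pow V. sg W u * sg W v) = 0"
proof -
  define h where "h W = (if u \<in> W then W - {u} else insert u W)" for W
  have "(\<Sum>W\<in>Pow V. sg W u * sg W v) = (\<Sum>W\<in>Pow V. sg (h W) u * sg (h W) v)"
    by (rule sum.reindex_bij_witness[where i=h and j=h]) (use assms in \<open>auto simp: h_def insert_absorb\<close>)
  also have "\<dots> = - (\<Sum>W\<in>Pow V. sg W u * sg W v)"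
    unfolding sum_negf[symmetric] by (intro sum.cong refl) (use assms(3) in \<open>auto simp: h_def sg_def\<close>)
  finally show ?thesis by simp
qed

lemma sg_sq: "sg W u * sg W u = 1" by (simp add: sg_def)

lemma second_moment:
  assumes "finite V"
  shows "(\<Sum>W\<in>Pow V. (\<Sum>v\<in>V. c v * sg W v)^2) = 2 ^ card V * (\<Sum>v\<in>V. (c v)^2)"
proof -
  have "(\<Sum>W\<in>Pow V. (\<Sum>v\<in>V. c v * sg W v)^2)
      = (\<Sum>W\<in>Pow V. \<Sum>u\<in>V. \<Sum>v\<in>V. c u * c v * (sg W u * sg W v))"
    by (simp add: power2_eq_square sum_product algebra_simps)
  also have "\<dots> = (\<Sum>u\<in>V. \<Sum>v\<in>V. c u * c v * (\<Sum>W\<in>Pow V. sg W u * sg W v))"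
    by (simp add: sum.swap[of _ "Pow V"] sum_distrib_left)
  also have "\<dots> = (\<Sum>u\<in>V. \<Sum>v\<in>V. if v = u then c u * c u * 2 ^ card V else 0)"
  proof (intro sum.cong refl)
    fix u v assume uv: "u \<in> V" "v \<in> V"
    show "c u * c v * (\<Sum>W\<in>Pow V. sg W u * sg W v) = (if v = u then c u * c u * 2 ^ card V else 0)"
    proof (cases "v = u")
      case True thus ?thesis using assms by (simp add: sg_sq card_Pow)
    next
      case False thus ?thesis using sg_orth[OF assms uv(1), of v] by auto
    qed
  qed
  also have "\<dots> = 2 ^ card V * (\<Sum>v\<in>V. (c v)^2)"
    using assms by (simp add: sum_distrib_left power2_eq_square mult_ac)
  finally show ?thesis .
qed

lemma sum_sg:
  assumes "finite N"
  shows "(\<Sum>v\<in>N. sg W v) = 2 * real (card (N \<inter> W)) - real (card N)"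
proof -
  have "(\<Sum>v\<in>N. sg W v) = (\<Sum>v\<in>N. 2 * (if v \<in> W then 1 else 0) - 1)"
    by (intro sum.cong) (auto simp: sg_def)
  also have "\<dots> = 2 * real (card (N \<inter> W)) - real (card N)"
    using assms by (simp add: sum_subtractf sum_distrib_left[symmetric] sum.If_cases)
  finally show ?thesis .
qed

lemma count_inter:
  assumes "finite V" "U \<subseteq> V"
  shows "card {W\<in>Pow V. card (W \<inter> U) = j} = 2 ^ (card V - card U) * (card U choose j)"
proof -
  have fU: "finite U" using assms finite_subset by blast
  let ?A = "{X. X \<subseteq> U \<and> card X = j} \<times> Pow (V - U)"
  have eq: "{W\<in>Pow V. card (W \<inter> U) = j} = (\<lambda>(X,Y). X \<union> Y) ` ?A"
  proof (intro equalityI subsetI)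
    fix W assume "W \<in> {W\<in>Pow V. card (W \<inter> U) = j}"
    then have 1: "(W \<inter> U, W - U) \<in> ?A" by auto
    have 2: "W = (\<lambda>(X,Y). X \<union> Y) (W \<inter> U, W - U)" by auto
    show "W \<in> (\<lambda>(X,Y). X \<union> Y) ` ?A" using 1 2 by (rule rev_image_eqI)
  next
    fix W assume "W \<in> (\<lambda>(X,Y). X \<union> Y) ` ?A"
    then obtain X Y where "W = X \<union> Y" "X \<subseteq> U" "card X = j" "Y \<subseteq> V - U" by auto
    moreover have "(X \<union> Y) \<inter> U = X" using calculation by auto
    ultimately show "W \<in> {W\<in>Pow V. card (W \<inter> U) = j}" using assms by auto
  qed
  have inj: "inj_on (\<lambda>(X,Y). X \<union> Y) ?A"
  proof (rule inj_onI, clarify)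
    fix X Y X' Y' assume "X \<subseteq> U" "Y \<subseteq> V - U" "X' \<subseteq> U" "Y' \<subseteq> V - U" "X \<union> Y = X' \<union> Y'"
    then show "X = X' \<and> Y = Y'" by blast
  qed
  have "card {W\<in>Pow V. card (W \<inter> U) = j} = card ?A"
    unfolding eq by (rule card_image[OF inj])
  also have "\<dots> = (card U choose j) * 2 ^ card (V - U)"
    using assms fU by (simp add: card_cartesian_product n_subsets card_Pow)
  finally show ?thesis using assms fU by (simp add: card_Diff_subset mult.commute)
qed

lemma count_flip:
  assumes "finite V" "A \<subseteq> V" "B \<subseteq> V" "A \<inter> B = {}"
  shows "card {W\<in>Pow V. card (W \<inter> A) = card (W \<inter> B)} = card {W\<in>Pow V. card (W \<inter> (A \<union> B)) = card B}"
proof -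
  define \<phi> where "\<phi> W = (W - B) \<union> (B - W)" for W
  have fA: "finite A" and fB: "finite B" using assms finite_subset by blast+
  have key: "card (\<phi> W \<inter> (A \<union> B)) = card (W \<inter> A) + card (B - W)" for W
  proof -
    have "\<phi> W \<inter> (A \<union> B) = (W \<inter> A) \<union> (B - W)" using assms(4) by (auto simp: \<phi>_def)
    moreover have "(W \<inter> A) \<inter> (B - W) = {}" by auto
    ultimately show ?thesis using fA fB by (simp add: card_Un_disjoint)
  qed
  have cB: "card (B - W) + card (W \<inter> B) = card B" for W
  proof -
    have "B = (B - W) \<union> (W \<inter> B)" "(B - W) \<inter> (W \<inter> B) = {}" by auto
    then show ?thesis using fB by (metis card_Un_disjoint finite_Diff finite_Int)
  qed
  have bij: "bij_betw \<phi> {W\<in>Pow V. card (W \<inter> A) = card (W \<inter> B)} {W\<in>Pow V. card (W \<inter> (A \<union> B)) = card B}"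
  proof (rule bij_betw_byWitness[where f'=\<phi>])
    show "\<forall>a\<in>{W\<in>Pow V. card (W \<inter> A) = card (W \<inter> B)}. \<phi> (\<phi> a) = a" by (auto simp: \<phi>_def)
    show "\<forall>a\<in>{W\<in>Pow V. card (W \<inter> (A \<union> B)) = card B}. \<phi> (\<phi> a) = a" by (auto simp: \<phi>_def)
    show "\<phi> ` {W\<in>Pow V. card (W \<inter> A) = card (W \<inter> B)} \<subseteq> {W\<in>Pow V. card (W \<inter> (A \<union> B)) = card B}"
    proof
      fix X assume "X \<in> \<phi> ` {W\<in>Pow V. card (W \<inter> A) = card (W \<inter> B)}"
      then obtain W where W: "W \<subseteq> V" "card (W \<inter> A) = card (W \<inter> B)" "X = \<phi> W" by auto
      have "card (X \<inter> (A \<union> B)) = card B" using key[of W] cB[of W] W by simp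
      moreover have "X \<subseteq> V" using W assms by (auto simp: \<phi>_def)
      ultimately show "X \<in> {W\<in>Pow V. card (W \<inter> (A \<union> B)) = card B}" by simp
    qed
    show "\<phi> ` {W\<in>Pow V. card (W \<inter> (A \<union> B)) = card B} \<subseteq> {W\<in>Pow V. card (W \<inter> A) = card (W \<inter> B)}"
    proof
      fix X assume "X \<in> \<phi> ` {W\<in>Pow V. card (W \<inter> (A \<union> B)) = card B}"
      then obtain W where W: "W \<subseteq> V" "card (W \<inter> (A \<union> B)) = card B" "X = \<phi> W" by auto
      have "\<phi> X = W" using W by (auto simp: \<phi>_def)
      then have "card (X \<inter> A) = card (X \<inter> B)" using key[of X] cB[of X] W by simp
      moreover have "X \<subseteq> V" using W assms by (auto simp: \<phi>_def)
      ultimately show "X \<in> {W\<in>Pow V. card (W \<inter> A) = card (W \<inter> B)}" by simp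
    qed
  qed
  then show ?thesis by (rule bij_betw_same_card)
qed



lemma central_rec_aux:
  fixes n X Y Z C :: nat
  assumes "(n+1)*X = (2*n+2)*Y" "(n+1)*Z = (2*n+1)*C" "Z = Y"
  shows "(n+1)*X = 2*(2*n+1)*C"
proof -
  have "(n+1)*X = 2*((n+1)*Z)" using assms(1,3) by (simp add: algebra_simps)
  then show ?thesis using assms(2) by simp
qed

lemma central_rec: "Suc n * (2 * Suc n choose Suc n) = 2 * (2*n+1) * (2*n choose n)"
proof -
  have a: "Suc n * (Suc (2*n+1) choose Suc n) = Suc (2*n+1) * ((2*n+1) choose n)"
    by (rule Suc_times_binomial)
  have b: "Suc n * (Suc (2*n) choose Suc n) = Suc (2*n) * ((2*n) choose n)"
    by (rule Suc_times_binomial)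
  have c: "(Suc (2*n) choose Suc n) = (2*n+1) choose n"
    using binomial_symmetric[of "Suc n" "Suc (2*n)"] by (simp del: binomial_Suc_Suc)
  have e: "2 * Suc n = Suc (2*n+1)" by simp
  show ?thesis
    using central_rec_aux[of n "2 * Suc n choose Suc n" "(2*n+1) choose n" "Suc (2*n) choose Suc n" "2*n choose n"]
      a b c unfolding e by (simp del: binomial_Suc_Suc)
qed

lemma central_bound: "(2*n choose n)^2 * (3*n+1) \<le> 16^n"
proof (induction n)
  case 0 then show ?case by simp
next
  case (Suc n)
  let ?C = "2*n choose n" and ?D = "2 * Suc n choose Suc n"
  have poly: "(2*n+1)^2 * (3*n+4) \<le> 4 * (Suc n)^2 * (3*n+1)"
    by (simp add: power2_eq_square algebra_simps)
  have "(Suc n)^2 * (?D^2 * (3 * Suc n + 1)) = (Suc n * ?D)^2 * (3*n+4)"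
    by (simp only: power_mult_distrib) (simp del: binomial_Suc_Suc)
  also have "\<dots> = 4 * ?C^2 * ((2*n+1)^2 * (3*n+4))"
    unfolding central_rec by (simp only: power_mult_distrib) (simp del: binomial_Suc_Suc)
  also have "\<dots> \<le> 4 * ?C^2 * (4 * (Suc n)^2 * (3*n+1))"
    by (intro mult_le_mono2 poly)
  also have "\<dots> = 16 * (Suc n)^2 * (?C^2 * (3*n+1))" by (simp add: algebra_simps del: binomial_Suc_Suc)
  also have "\<dots> \<le> 16 * (Suc n)^2 * 16^n"
    by (intro mult_le_mono2 Suc.IH)
  also have "\<dots> = (Suc n)^2 * 16 ^ Suc n" by simp
  finally show ?case by simp
qed

lemma binom_sq_bound:
  assumes "m \<ge> 1"
  shows "(m choose j)^2 * m \<le> 4^m"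
proof (cases "even m")
  case True
  then obtain n where m: "m = 2*n" by auto
  have "(m choose j)^2 * m \<le> (2*n choose n)^2 * (3*n+1)"
    using binomial_maximum'[of n j] m by (intro mult_le_mono power_mono) auto
  also have "\<dots> \<le> 16^n" by (rule central_bound)
  also have "\<dots> = 4^m" by (simp add: m power_mult)
  finally show ?thesis .
next
  case False
  then obtain n where m: "m = 2*n+1" using oddE by blast
  have "m choose j \<le> m choose n" using binomial_maximum[of m j] m by simp
  have e0: "Suc n * (Suc (2*n+1) choose Suc n) = Suc (2*n+1) * ((2*n+1) choose n)"
    by (rule Suc_times_binomial)
  have e1: "2 * Suc n = Suc (2*n+1)" by simp
  have e: "(2 * Suc n choose Suc n) = 2 * ((2*n+1) choose n)"
  proof -
    have "Suc n * (2 * Suc n choose Suc n) = Suc n * (2 * ((2*n+1) choose n))"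
      using e0 unfolding e1[symmetric] by (simp del: binomial_Suc_Suc)
    moreover have "Suc n \<noteq> 0" by simp
    ultimately show ?thesis using mult_left_cancel by blast
  qed
  have "4 * ((m choose j)^2 * m) \<le> 4 * ((m choose n)^2 * (3 * Suc n + 1))"
    using \<open>m choose j \<le> m choose n\<close> m by (intro mult_le_mono2 mult_le_mono power_mono) auto
  also have "\<dots> = (2 * Suc n choose Suc n)^2 * (3 * Suc n + 1)"
    unfolding e m by (simp only: power_mult_distrib) (simp del: binomial_Suc_Suc)
  also have "\<dots> \<le> 16 ^ Suc n" by (rule central_bound)
  also have "\<dots> = 4 * 4^m" by (simp add: m power_mult)
  finally show ?thesis by simp
qed

lemma binom_real_bound:
  assumes "m \<ge> 1"
  shows "real (m choose j) \<le> 2^m / sqrt (real m)"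
proof -
  have "real ((m choose j)^2 * m) \<le> real (4^m)" using binom_sq_bound[OF assms] by (simp only: of_nat_le_iff)
  moreover have "(2::real)^m * 2^m = 4^m" by (simp add: power_mult_distrib[symmetric])
  ultimately have "(real (m choose j) * sqrt m)^2 \<le> (2^m)^2"
    by (simp add: power_mult_distrib power2_eq_square[of "2^m"] mult.commute)
  then have "real (m choose j) * sqrt m \<le> 2^m"
    by (rule power2_le_imp_le) simp
  then show ?thesis using assms by (simp add: field_simps)
qed

lemma collision:
  assumes "finite V" "Nx \<subseteq> V" "Ny \<subseteq> V" "(Nx - Ny) \<union> (Ny - Nx) \<noteq> {}"
  shows "real (card {W\<in>Pow V. card (Nx \<inter> W) = card (Ny \<inter> W)})
           \<le> 2 ^ card V / sqrt (real (card ((Nx - Ny) \<union> (Ny - Nx))))"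
proof -
  define A where "A = Nx - Ny"
  define B where "B = Ny - Nx"
  have fin: "finite Nx" "finite Ny" using assms finite_subset by blast+
  then have finAB: "finite A" "finite B" by (auto simp: A_def B_def)
  have sx: "card (Nx \<inter> W) = card (W \<inter> A) + card (W \<inter> (Nx \<inter> Ny))" for W
  proof -
    have "Nx \<inter> W = (W \<inter> A) \<union> (W \<inter> (Nx \<inter> Ny))" "(W \<inter> A) \<inter> (W \<inter> (Nx \<inter> Ny)) = {}"
      by (auto simp: A_def)
    then show ?thesis using fin finAB by (simp add: card_Un_disjoint)
  qed
  have sy: "card (Ny \<inter> W) = card (W \<inter> B) + card (W \<inter> (Nx \<inter> Ny))" for W
  proof -
    have "Ny \<inter> W = (W \<inter> B) \<union> (W \<inter> (Nx \<inter> Ny))" "(W \<inter> B) \<inter> (W \<inter> (Nx \<inter> Ny)) = {}"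
      by (auto simp: B_def)
    then show ?thesis using fin finAB by (simp add: card_Un_disjoint)
  qed
  have "{W\<in>Pow V. card (Nx \<inter> W) = card (Ny \<inter> W)} = {W\<in>Pow V. card (W \<inter> A) = card (W \<inter> B)}"
    using sx sy by auto
  also have "card \<dots> = card {W\<in>Pow V. card (W \<inter> (A \<union> B)) = card B}"
    by (rule count_flip) (use assms in \<open>auto simp: A_def B_def\<close>)
  also have "\<dots> = 2 ^ (card V - card (A \<union> B)) * (card (A \<union> B) choose card B)"
    by (rule count_inter) (use assms in \<open>auto simp: A_def B_def\<close>)
  finally have eq: "card {W\<in>Pow V. card (Nx \<inter> W) = card (Ny \<inter> W)} =
      2 ^ (card V - card (A \<union> B)) * (card (A \<union> B) choose card B)" .
  have fU: "finite (A \<union> B)" using fin by (simp add: A_def B_def)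
  have U1: "card (A \<union> B) \<ge> 1" using assms(4) fU by (simp add: A_def B_def Suc_le_eq card_gt_0_iff)
  have UV: "card (A \<union> B) \<le> card V" using assms by (intro card_mono) (auto simp: A_def B_def)
  have "real (card {W\<in>Pow V. card (Nx \<inter> W) = card (Ny \<inter> W)})
      = real (2 ^ (card V - card (A \<union> B)) * (card (A \<union> B) choose card B))"
    by (simp only: eq)
  also have "\<dots> = 2 ^ (card V - card (A \<union> B)) * real (card (A \<union> B) choose card B)"
    by simp
  also have "\<dots> \<le> 2 ^ (card V - card (A \<union> B)) * (2 ^ card (A \<union> B) / sqrt (card (A \<union> B)))"
    by (intro mult_left_mono binom_real_bound U1) simp
  also have "\<dots> = 2 ^ card V / sqrt (card (A \<union> B))"
    using UV by (simp add: power_add[symmetric])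
  finally show ?thesis by (simp add: A_def B_def)
qed



lemma sum_bool_card:
  assumes "finite A"
  shows "(\<Sum>x\<in>A. (of_bool (P x) :: real)) = real (card {x\<in>A. P x})"
proof -
  have "A \<inter> {x. P x} = {x\<in>A. P x}" by auto
  then show ?thesis using assms by simp
qed

lemma comb:
  assumes "finite Q0"
  shows "real (card Q0) - (\<Sum>x\<in>Q0. (of_bool (\<not> P x) + (\<Sum>y\<in>Q0-{x}. of_bool (g x = g y))))
     \<le> real (card (g ` {x\<in>Q0. P x \<and> (\<forall>y\<in>Q0. y \<noteq> x \<longrightarrow> g y \<noteq> g x)}))"
proof -
  define G where "G = {x\<in>Q0. P x \<and> (\<forall>y\<in>Q0. y \<noteq> x \<longrightarrow> g y \<noteq> g x)}"
  have inj: "inj_on g G" by (rule inj_onI) (auto simp: G_def)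
  have GQ: "G \<subseteq> Q0" by (auto simp: G_def)
  have fG: "finite G" using assms GQ finite_subset by blast
  have "real (card Q0) - real (card G) = real (card (Q0 - G))"
    using GQ assms fG by (simp add: card_Diff_subset of_nat_diff card_mono)
  also have "\<dots> = (\<Sum>x\<in>Q0. (of_bool (x \<notin> G) :: real))"
  proof -
    have "Q0 - G = {x\<in>Q0. x \<notin> G}" by auto
    then show ?thesis using sum_bool_card[OF assms, of "\<lambda>x. x \<notin> G"] by simp
  qed
  also have "\<dots> \<le> (\<Sum>x\<in>Q0. (of_bool (\<not> P x) + (\<Sum>y\<in>Q0-{x}. of_bool (g x = g y))))"
  proof (rule sum_mono)
    fix x assume x: "x \<in> Q0"
    have nn: "0 \<le> (\<Sum>y\<in>Q0-{x}. (of_bool (g x = g y) :: real))" by (simp add: sum_nonneg)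
    show "(of_bool (x \<notin> G) :: real) \<le> of_bool (\<not> P x) + (\<Sum>y\<in>Q0-{x}. of_bool (g x = g y))"
    proof (cases "x \<in> G")
      case True then show ?thesis using nn by simp
    next
      case False
      then have "\<not> P x \<or> (\<exists>y\<in>Q0. y \<noteq> x \<and> g y = g x)" using x by (auto simp: G_def)
      then show ?thesis
      proof
        assume "\<not> P x" then show ?thesis using nn False by simp
      next
        assume "\<exists>y\<in>Q0. y \<noteq> x \<and> g y = g x"
        then obtain y where y: "y \<in> Q0 - {x}" "g x = g y" by auto
        have "(of_bool (g x = g y) :: real) \<le> (\<Sum>y\<in>Q0-{x}. of_bool (g x = g y))"
          by (rule member_le_sum[of y "Q0 - {x}" "\<lambda>y. (of_bool (g x = g y) :: real)"]) (use y assms in auto)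
        then show ?thesis using y False by simp
      qed
    qed
  qed
  finally show ?thesis using card_image[OF inj] by (simp add: G_def)
qed



lemma nbhd_sub: "E \<subseteq> V1 \<times> V2 \<Longrightarrow> nbhd E x \<subseteq> V2"
  by (auto simp: nbhd_def)

lemma bad_bound:
  fixes V2 :: "'b set" and E :: "('a \<times> 'b) set"
  assumes fV2: "finite V2" and NV: "\<And>z. nbhd E z \<subseteq> V2" and n0: "card V2 > 0"
    and dd: "\<bar>real (deg E x) - real (deg E x0)\<bar> \<le> sqrt (real (card V2))"
  shows "real (card {W\<in>Pow V2. \<not> \<bar>real_of_int (int (degS E W x) - int (degS E W x0))\<bar> \<le> 3 * sqrt (real (card V2))})
          \<le> 2 ^ card V2 / 25"
proof -
  define n where "n = card V2"
  define S where "S = sqrt (real n)"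
  define c where "c v = (of_bool (v \<in> nbhd E x) - of_bool (v \<in> nbhd E x0) :: real)" for v
  define X where "X W = (\<Sum>v\<in>V2. c v * sg W v)" for W
  define B where "B = {W\<in>Pow V2. \<not> \<bar>real_of_int (int (degS E W x) - int (degS E W x0))\<bar> \<le> 3 * S}"
  have fN: "finite (nbhd E z)" for z using NV fV2 finite_subset by blast
  have sumN: "(\<Sum>v\<in>V2. of_bool (v \<in> nbhd E z) * sg W v) = 2 * real (degS E W z) - real (deg E z)" for z W
  proof -
    have "V2 \<inter> {v. v \<in> nbhd E z} = nbhd E z" using NV by auto
    then have "(\<Sum>v\<in>V2. of_bool (v \<in> nbhd E z) * sg W v) = (\<Sum>v\<in>nbhd E z. sg W v)"
      using fV2 by simp
    also have "\<dots> = 2 * real (degS E W z) - real (deg E z)"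
      by (simp add: sum_sg[OF fN] degS_def deg_def)
    finally show ?thesis .
  qed
  have Xeq: "X W = 2 * real_of_int (int (degS E W x) - int (degS E W x0)) - (real (deg E x) - real (deg E x0))" for W
    unfolding X_def c_def by (simp add: left_diff_distrib sum_subtractf sumN)
  have c2: "(c v)^2 \<le> 1" for v by (simp add: c_def)
  have Sn: "S^2 = real n" by (simp add: S_def)
  have S0: "S \<ge> 0" by (simp add: S_def)
  have npos: "real n > 0" using n0 by (simp add: n_def)
  have "(\<Sum>W\<in>Pow V2. (X W)^2) = 2 ^ n * (\<Sum>v\<in>V2. (c v)^2)"
    unfolding X_def n_def by (rule second_moment[OF fV2])
  also have "\<dots> \<le> 2 ^ n * (\<Sum>v\<in>V2. 1)"
    by (intro mult_left_mono sum_mono c2) simp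
  also have "\<dots> = 2 ^ n * real n" by (simp add: n_def)
  finally have tot: "(\<Sum>W\<in>Pow V2. (X W)^2) \<le> 2 ^ n * real n" .
  have big: "25 * real n < (X W)^2" if "W \<in> B" for W
  proof -
    have "\<bar>real_of_int (int (degS E W x) - int (degS E W x0))\<bar> > 3 * S" using that by (auto simp: B_def)
    then have "\<bar>X W\<bar> > 5 * S" unfolding Xeq using dd by (simp add: S_def n_def abs_if split: if_splits)
    then have "(5 * S)^2 < \<bar>X W\<bar>^2" using S0 by (intro power_strict_mono) auto
    then show ?thesis using Sn by (simp add: power_mult_distrib)
  qed
  have fB: "finite B" using fV2 by (simp add: B_def)
  have "real (card B) * (25 * real n) = (\<Sum>W\<in>B. 25 * real n)" by simp
  also have "\<dots> \<le> (\<Sum>W\<in>B. (X W)^2)" using big by (intro sum_mono) (simp add: less_imp_le)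
  also have "\<dots> \<le> (\<Sum>W\<in>Pow V2. (X W)^2)"
    by (intro sum_mono2) (auto simp: B_def fV2)
  also have "\<dots> \<le> 2 ^ n * real n" by (rule tot)
  finally have "real (card B) * (25 * real n) \<le> 2 ^ n * real n" .
  then have "real (card B) * 25 \<le> 2 ^ n" using npos
    by (metis mult.assoc mult.commute mult_le_cancel_left_pos)
  then show ?thesis by (simp add: B_def S_def n_def)
qed

lemma coll_bound:
  fixes V2 :: "'b set" and E :: "('a \<times> 'b) set"
  assumes fV2: "finite V2" and NV: "\<And>z. nbhd E z \<subseteq> V2" and n0: "card V2 > 0"
    and eps: "0 < eps" "eps \<le> 1"
    and dv: "real (card (divg E x y)) \<ge> eps * real (card V2)"
  shows "real (card {W\<in>Pow V2. int (degS E W x) - int (degS E W x0) = int (degS E W y) - int (degS E W x0)})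
          \<le> 2 ^ card V2 / (eps * sqrt (real (card V2)))"
proof -
  define n where "n = card V2"
  have npos: "real n > 0" using n0 by (simp add: n_def)
  have set_eq: "{W\<in>Pow V2. int (degS E W x) - int (degS E W x0) = int (degS E W y) - int (degS E W x0)}
      = {W\<in>Pow V2. card (nbhd E x \<inter> W) = card (nbhd E y \<inter> W)}"
    by (auto simp: degS_def)
  have dpos: "real (card (divg E x y)) > 0" 
  proof -
    have "eps * real (card V2) > 0" using eps npos by (simp add: n_def)
    then show ?thesis using dv by linarith
  qed
  then have dne: "(nbhd E x - nbhd E y) \<union> (nbhd E y - nbhd E x) \<noteq> {}"
    by (auto simp: divg_def)
  have "real (card {W\<in>Pow V2. card (nbhd E x \<inter> W) = card (nbhd E y \<inter> W)})
      \<le> 2 ^ card V2 / sqrt (real (card ((nbhd E x - nbhd E y) \<union> (nbhd E y - nbhd E x))))"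
    by (rule collision[OF fV2 NV NV dne])
  also have "\<dots> = 2 ^ n / sqrt (real (card (divg E x y)))" by (simp add: divg_def n_def)
  also have "\<dots> \<le> 2 ^ n / (eps * sqrt (real n))"
  proof (rule divide_left_mono)
    have se: "eps \<le> sqrt eps"
    proof -
      have "eps = sqrt eps * sqrt eps" using eps by simp
      also have "\<dots> \<le> sqrt eps * 1" using eps by (intro mult_left_mono) auto
      finally show ?thesis by simp
    qed
    have "eps * sqrt (real n) \<le> sqrt eps * sqrt (real n)" using se by (intro mult_right_mono) auto
    also have "\<dots> = sqrt (eps * real n)" by (simp add: real_sqrt_mult)
    also have "\<dots> \<le> sqrt (real (card (divg E x y)))" using dv by (simp add: n_def)
    finally show "eps * sqrt (real n) \<le> sqrt (real (card (divg E x y)))" .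
    show "0 \<le> (2::real) ^ n" by simp
    show "0 < sqrt (real (card (divg E x y))) * (eps * sqrt (real n))"
      using dpos eps npos by simp
  qed
  finally show ?thesis unfolding set_eq n_def .
qed



lemma main_pos:
  fixes eps :: real and V2 :: "'b set" and E :: "('a \<times> 'b) set"
  assumes eps: "eps > 0" and fV2: "finite V2" and NV: "\<And>z. nbhd E z \<subseteq> V2"
    and n0: "card V2 > 0"
    and ps: "pair_star eps V1 V2 E P x0 (nat \<lfloor>sqrt (real (card V2))\<rfloor>)"
  shows "3/4 * 2 ^ card V2 \<le> real (card {W. W \<subseteq> V2 \<and> real (card (AWP E V2 P x0 W)) \<ge> eps/48 * sqrt (real (card V2))})"
proof -
  define n where "n = card V2"
  define S where "S = sqrt (real n)"
  define k where "k = nat \<lfloor>S\<rfloor>"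
  have n1: "real n \<ge> 1" using n0 by (simp add: n_def)
  have S1: "S \<ge> 1" using n1 by (simp add: S_def)
  have kS: "real k \<le> S" using S1 by (simp add: k_def)
  have k1: "k \<ge> 1"
  proof -
    have "(1::int) \<le> \<lfloor>S\<rfloor>" using S1 by (simp add: le_floor_iff)
    then have "nat 1 \<le> k" unfolding k_def by (rule nat_mono)
    then show ?thesis by simp
  qed
  from ps have PV1: "P \<subseteq> V1" and x0P: "x0 \<in> P" and cP: "card P = k + 1"
    and degc: "\<forall>x\<in>P - {x0}. \<bar>real (deg E x) - real (deg E x0)\<bar> \<le> S"
    and divc: "\<forall>u\<in>P. \<forall>v\<in>P. u \<noteq> v \<longrightarrow> real (card (divg E u v)) \<ge> eps * real n"
    unfolding pair_star_def by (simp_all add: k_def S_def n_def)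
  have fP: "finite P" by (rule card_ge_0_finite) (simp add: cP)
  define Q where "Q = P - {x0}"
  have cQ: "card Q = k" using cP x0P fP by (simp add: Q_def)
  have fQ: "finite Q" using fP by (simp add: Q_def)
  obtain y where yQ: "y \<in> Q" using k1 cQ by (metis card.empty ex_in_conv not_one_le_zero)
  have eps1: "eps \<le> 1"
  proof -
    have "eps * real n \<le> real (card (divg E y x0))" using divc yQ x0P by (auto simp: Q_def)
    also have "\<dots> \<le> real n"
      unfolding n_def using NV[of y] NV[of x0] fV2 by (intro of_nat_mono card_mono) (auto simp: divg_def)
    finally show ?thesis using n1 by simp
  qed
  define m where "m = max 1 (nat \<lfloor>eps * S / 12\<rfloor>)"
  have m1: "m \<ge> 1" by (simp add: m_def)
  have mk: "m \<le> k"
  proof -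
    have "eps * S / 12 \<le> S" using eps1 S1 eps by (simp add: mult_le_cancel_right1)
    then have "nat \<lfloor>eps * S / 12\<rfloor> \<le> k" unfolding k_def by (intro nat_mono floor_mono)
    then show ?thesis using k1 by (simp add: m_def)
  qed
  have fl: "real (nat \<lfloor>eps * S / 12\<rfloor>) \<le> eps * S / 12" and fl2: "eps * S / 12 - 1 < real (nat \<lfloor>eps * S / 12\<rfloor>)"
  proof -
    have "0 \<le> eps * S / 12" using eps S1 by simp
    then have "0 \<le> \<lfloor>eps * S / 12\<rfloor>" by simp
    then have e: "real (nat \<lfloor>eps * S / 12\<rfloor>) = real_of_int \<lfloor>eps * S / 12\<rfloor>" by simp
    show "real (nat \<lfloor>eps * S / 12\<rfloor>) \<le> eps * S / 12" unfolding e by (rule of_int_floor_le)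
    show "eps * S / 12 - 1 < real (nat \<lfloor>eps * S / 12\<rfloor>)" unfolding e by linarith
  qed
  have mle: "real m - 1 \<le> eps * S / 12"
    using fl eps S1 by (cases "nat \<lfloor>eps * S / 12\<rfloor> \<le> 1") (auto simp: m_def max_def)
  have mge: "eps * S / 24 \<le> real m"
  proof (cases "eps * S / 12 \<ge> 2")
    case True then show ?thesis using fl2 by (simp add: m_def) linarith
  next
    case False then show ?thesis using m1 by linarith
  qed
  obtain Q0 where Q0Q: "Q0 \<subseteq> Q" and cQ0: "card Q0 = m"
    using obtain_subset_with_card_n[of m Q] mk cQ by auto
  have fQ0: "finite Q0" using fQ Q0Q finite_subset by blast
  define f where "f x W = int (degS E W x) - int (degS E W x0)" for x W
  define Z where "Z W = (\<Sum>x\<in>Q0. (of_bool (\<not> \<bar>real_of_int (f x W)\<bar> \<le> 3 * S)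
                        + (\<Sum>y\<in>Q0-{x}. of_bool (f x W = f y W))) :: real)" for W
  have Z0: "Z W \<ge> 0" for W unfolding Z_def by (intro sum_nonneg add_nonneg_nonneg) auto
  have bad: "real (card {W\<in>Pow V2. \<not> \<bar>real_of_int (f x W)\<bar> \<le> 3 * S}) \<le> 2 ^ n / 25" if "x \<in> Q0" for x
    unfolding f_def S_def n_def
    by (rule bad_bound[OF fV2 NV n0]) (use degc that Q0Q in \<open>auto simp: Q_def S_def n_def\<close>)
  have coll: "real (card {W\<in>Pow V2. f x W = f y W}) \<le> 2 ^ n / (eps * S)"
    if "x \<in> Q0" "y \<in> Q0 - {x}" for x y
    unfolding f_def S_def n_def
    by (rule coll_bound[OF fV2 NV n0 eps eps1]) (use divc[rule_format, of x y] that Q0Q in \<open>auto simp: Q_def n_def\<close>)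
  have sumZ: "(\<Sum>W\<in>Pow V2. Z W) \<le> real m * 2 ^ n * (1/25 + 1/12)"
  proof -
    have "(\<Sum>W\<in>Pow V2. Z W) = (\<Sum>x\<in>Q0. (\<Sum>W\<in>Pow V2. (of_bool (\<not> \<bar>real_of_int (f x W)\<bar> \<le> 3 * S) :: real))
            + (\<Sum>y\<in>Q0-{x}. \<Sum>W\<in>Pow V2. (of_bool (f x W = f y W) :: real)))"
      unfolding Z_def by (simp add: sum.distrib sum.swap[of _ "Pow V2"])
    also have "\<dots> = (\<Sum>x\<in>Q0. real (card {W\<in>Pow V2. \<not> \<bar>real_of_int (f x W)\<bar> \<le> 3 * S})
            + (\<Sum>y\<in>Q0-{x}. real (card {W\<in>Pow V2. f x W = f y W})))"
      using fV2 by (simp only: sum_bool_card finite_Pow_iff)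
    also have "\<dots> \<le> (\<Sum>x\<in>Q0. 2 ^ n / 25 + (\<Sum>y\<in>Q0-{x}. 2 ^ n / (eps * S)))"
      by (intro sum_mono add_mono bad coll) auto
    also have "\<dots> = real m * (2 ^ n / 25 + (real m - 1) * (2 ^ n / (eps * S)))"
      using fQ0 cQ0 m1 by (simp add: of_nat_diff)
    also have "\<dots> \<le> real m * (2 ^ n / 25 + (eps * S / 12) * (2 ^ n / (eps * S)))"
      using mle eps S1 by (intro mult_left_mono add_left_mono mult_right_mono) auto
    also have "\<dots> = real m * 2 ^ n * (1/25 + 1/12)"
      using eps S1 by (simp add: field_simps)
    finally show ?thesis .
  qed
  define BadW where "BadW = {W\<in>Pow V2. real m / 2 \<le> Z W}"
  have fBad: "finite BadW" using fV2 by (simp add: BadW_def)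
  have markov: "real (card BadW) * (real m / 2) \<le> (\<Sum>W\<in>Pow V2. Z W)"
  proof -
    have "real (card BadW) * (real m / 2) = (\<Sum>W\<in>BadW. real m / 2)" by simp
    also have "\<dots> \<le> (\<Sum>W\<in>BadW. Z W)" by (intro sum_mono) (auto simp: BadW_def)
    also have "\<dots> \<le> (\<Sum>W\<in>Pow V2. Z W)" using fV2 Z0 by (intro sum_mono2) (auto simp: BadW_def)
    finally show ?thesis .
  qed
  have cBad: "real (card BadW) \<le> 2 ^ n / 4"
  proof -
    have "real (card BadW) * (real m / 2) \<le> real m * 2 ^ n * (1/25 + 1/12)"
      using markov sumZ by linarith
    then have "real (card BadW) * real m \<le> real m * (2 ^ n * (2/25 + 2/12))" by (simp add: field_simps)
    then have "real (card BadW) \<le> 2 ^ n * (2/25 + 2/12)" using m1 by (simp add: mult.commute)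
    also have "\<dots> \<le> 2 ^ n / 4" by simp
    finally show ?thesis .
  qed
  have good: "eps / 48 * S \<le> real (card (AWP E V2 P x0 W))" if W: "W \<in> Pow V2 - BadW" for W
  proof -
    define G where "G = {x\<in>Q0. \<bar>real_of_int (f x W)\<bar> \<le> 3 * S \<and> (\<forall>y\<in>Q0. y \<noteq> x \<longrightarrow> f y W \<noteq> f x W)}"
    have c1: "real (card Q0) - Z W \<le> real (card ((\<lambda>x. f x W) ` G))"
      unfolding Z_def G_def by (rule comb[OF fQ0])
    have sub: "(\<lambda>x. f x W) ` G \<subseteq> AWP E V2 P x0 W"
      using Q0Q by (auto simp: G_def AWP_def f_def Q_def S_def n_def)
    have finA: "finite (AWP E V2 P x0 W)"
    proof -
      have "AWP E V2 P x0 W \<subseteq> (\<lambda>x. f x W) ` (P - {x0})" by (auto simp: AWP_def f_def)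
      then show ?thesis using fP finite_subset by blast
    qed
    have "real (card ((\<lambda>x. f x W) ` G)) \<le> real (card (AWP E V2 P x0 W))"
      using sub finA by (simp add: card_mono)
    moreover have "Z W < real m / 2" using W by (auto simp: BadW_def)
    ultimately have "real m / 2 \<le> real (card (AWP E V2 P x0 W))" using c1 cQ0 by linarith
    then show ?thesis using mge by linarith
  qed
  have "Pow V2 - BadW \<subseteq> {W. W \<subseteq> V2 \<and> real (card (AWP E V2 P x0 W)) \<ge> eps/48 * sqrt (real (card V2))}"
    using good by (auto simp: S_def n_def)
  then have "real (card (Pow V2 - BadW)) \<le> real (card {W. W \<subseteq> V2 \<and> real (card (AWP E V2 P x0 W)) \<ge> eps/48 * sqrt (real (card V2))})"
    using fV2 by (intro of_nat_mono card_mono) auto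
  moreover have "real (card (Pow V2 - BadW)) = 2 ^ n - real (card BadW)"
  proof -
    have "BadW \<subseteq> Pow V2" by (auto simp: BadW_def)
    moreover have "card BadW \<le> card (Pow V2)" using fV2 \<open>BadW \<subseteq> Pow V2\<close> by (intro card_mono) auto
    ultimately show ?thesis using fV2 fBad by (simp add: card_Diff_subset of_nat_diff card_Pow n_def)
  qed
  ultimately show ?thesis using cBad by (simp add: n_def)
qed


theorem lemma3p3:
  fixes eps :: real
  assumes "eps > 0"
  shows "\<exists>\<delta>>0. \<forall>(V1 :: 'a set) (V2 :: 'b set) E P x0.
           finite V1 \<longrightarrow> finite V2 \<longrightarrow> E \<subseteq> V1 \<times> V2 \<longrightarrow>
           real (card V1) \<ge> real (card V2) / 2 \<longrightarrow>
           pair_star eps V1 V2 E P x0 (nat \<lfloor>sqrt (real (card V2))\<rfloor>) \<longrightarrow>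
           real (card {W. W \<subseteq> V2 \<and> real (card (AWP E V2 P x0 W)) \<ge> \<delta> * sqrt (real (card V2))})
             \<ge> 3 / 4 * 2 ^ card V2"
proof (rule exI[of _ "eps/48"], intro conjI allI impI)
  show "eps / 48 > 0" using assms by simp
next
  fix V1 :: "'a set" and V2 :: "'b set" and E P x0
  assume fV2: "finite V2" and EV: "E \<subseteq> V1 \<times> V2"
    and ps: "pair_star eps V1 V2 E P x0 (nat \<lfloor>sqrt (real (card V2))\<rfloor>)"
  show "real (card {W. W \<subseteq> V2 \<and> real (card (AWP E V2 P x0 W)) \<ge> eps / 48 * sqrt (real (card V2))})
             \<ge> 3 / 4 * 2 ^ card V2"
  proof (cases "card V2 = 0")
    case True
    then have V: "V2 = {}" using fV2 by simp
    have "{W. W \<subseteq> V2 \<and> real (card (AWP E V2 P x0 W)) \<ge> eps / 48 * sqrt (real (card V2))} = {{}}"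
      by (auto simp: V)
    then show ?thesis using V by simp
  next
    case False
    show ?thesis
      by (rule main_pos[OF assms fV2 nbhd_sub[OF EV]]) (use False ps in auto)
  qed
qed

end
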